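(* Let $A\in\mathbb{R}^{m\times n}$ be semi-monotone, let $A=P_1-R_1+S_1$ be a double proper weak regular splitting and $A=P_2-R_2+S_2$ a double proper regular splitting of $A$. Suppose $N(R_2)\supseteq N(P_2)$, $R(R_2)\subseteq R(P_2)$, $-1\notin\sigma(R_2P_1^{\dagger})$ and $\widehat{\mathcal{A}}^{\dagger}\geq 0$, where $\widehat{\mathcal{A}}=(I+R_2P_1^{\dagger})A$. If $P_1^{\dagger}R_1\geq P_2^{\dagger}R_2$, $P_2^{\dagger}S_2\geq P_1^{\dagger}S_1$ and $P_2^{\dagger}R_2+P_2^{\dagger}S_2\leq 0$, then $\rho(\mathcal{W}_{12})\leq\rho(T_1)<1$, where $$\mathcal{W}_{12}=\begin{pmatrix} P_2^{\dagger}R_2P_1^{\dagger}R_1-P_2^{\dagger}S_2 & -P_2^{\dagger}R_2P_1^{\dagger}S_1\\ I & 0\end{pmatrix},\qquad T_1=\begin{pmatrix} P_1^{\dagger}R_1 & -P_1^{\dagger}S_1\\ I&0\end{pmatrix}.$$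
   Context: For $M\in\mathbb{R}^{m\times n}$, $M^{\dagger}$ is its Moore–Penrose inverse, $R(M)$, $N(M)$ its range and null space; inequalities are entrywise; $\rho$ is the spectral radius, $\sigma$ the spectrum. $A$ is semi-monotone if $A^{\dagger}\geq0$. A double splitting $A=P-R+S$ is a double proper splitting if $R(P)=R(A)$ and $N(P)=N(A)$; it is double proper regular if moreover $P^{\dagger}\geq0$, $R\geq0$, $S\leq0$; double proper weak regular if moreover $P^{\dagger}\geq 0$, $P^{\dagger}R\geq 0$, $P^{\dagger}S\leq 0$. *)

theory Defs
  imports "Jordan_Normal_Form.Spectral_Radius" "Jordan_Normal_Form.Matrix_Kernel"
begin

definition is_penrose_inverse :: "real mat \<Rightarrow> real mat \<Rightarrow> bool" where
  "is_penrose_inverse A X \<longleftrightarrow>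
     X \<in> carrier_mat (dim_col A) (dim_row A) \<and>
     A * X * A = A \<and> X * A * X = X \<and>
     transpose_mat (A * X) = A * X \<and> transpose_mat (X * A) = X * A"

definition pinv :: "real mat \<Rightarrow> real mat" where
  "pinv A = (THE X. is_penrose_inverse A X)"

definition mat_range :: "real mat \<Rightarrow> real vec set" where
  "mat_range M = {M *\<^sub>v x | x. x \<in> carrier_vec (dim_col M)}"

definition mat_null :: "real mat \<Rightarrow> real vec set" where
  "mat_null M = mat_kernel M"

definition semi_monotone :: "real mat \<Rightarrow> bool" where
  "semi_monotone A \<longleftrightarrow> pinv A \<ge> 0\<^sub>m (dim_col A) (dim_row A)"

definition double_splitting :: "nat \<Rightarrow> nat \<Rightarrow> real mat \<Rightarrow> real mat \<Rightarrow> real mat \<Rightarrow> real mat \<Rightarrow> bool" where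
  "double_splitting m n A P R S \<longleftrightarrow>
     A \<in> carrier_mat m n \<and> P \<in> carrier_mat m n \<and> R \<in> carrier_mat m n \<and>
     S \<in> carrier_mat m n \<and> A = P - R + S"

definition double_proper_splitting :: "nat \<Rightarrow> nat \<Rightarrow> real mat \<Rightarrow> real mat \<Rightarrow> real mat \<Rightarrow> real mat \<Rightarrow> bool" where
  "double_proper_splitting m n A P R S \<longleftrightarrow>
     double_splitting m n A P R S \<and> mat_range P = mat_range A \<and> mat_null P = mat_null A"

definition double_proper_regular_splitting :: "nat \<Rightarrow> nat \<Rightarrow> real mat \<Rightarrow> real mat \<Rightarrow> real mat \<Rightarrow> real mat \<Rightarrow> bool" where
  "double_proper_regular_splitting m n A P R S \<longleftrightarrow>
     double_proper_splitting m n A P R S \<and> pinv P \<ge> 0\<^sub>m n m \<and>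
     R \<ge> 0\<^sub>m m n \<and> S \<le> 0\<^sub>m m n"

definition double_proper_weak_regular_splitting :: "nat \<Rightarrow> nat \<Rightarrow> real mat \<Rightarrow> real mat \<Rightarrow> real mat \<Rightarrow> real mat \<Rightarrow> bool" where
  "double_proper_weak_regular_splitting m n A P R S \<longleftrightarrow>
     double_proper_splitting m n A P R S \<and> pinv P \<ge> 0\<^sub>m n m \<and>
     pinv P * R \<ge> 0\<^sub>m n n \<and> pinv P * S \<le> 0\<^sub>m n n"

definition rspectrum :: "real mat \<Rightarrow> complex set" where
  "rspectrum M = spectrum (map_mat complex_of_real M)"

definition rho :: "real mat \<Rightarrow> real" where
  "rho M = spectral_radius (map_mat complex_of_real M)"

end

theory Submission
  imports Defs
begin

lemma penrose_unique:
  assumes X: "is_penrose_inverse A X" and Y: "is_penrose_inverse A Y"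
  shows "X = Y"
proof -
  define m where "m = dim_row A"
  define n where "n = dim_col A"
  have A: "A \<in> carrier_mat m n" unfolding m_def n_def by auto
  have Xc: "X \<in> carrier_mat n m" using X unfolding is_penrose_inverse_def m_def n_def by blast
  have Yc: "Y \<in> carrier_mat n m" using Y unfolding is_penrose_inverse_def m_def n_def by blast
  have AT: "A\<^sup>T \<in> carrier_mat n m" and XT: "X\<^sup>T \<in> carrier_mat m n" and YT: "Y\<^sup>T \<in> carrier_mat m n"
    using A Xc Yc by auto
  have AX: "A * X \<in> carrier_mat m m" and AY: "A * Y \<in> carrier_mat m m"
    and XA: "X * A \<in> carrier_mat n n" and YA: "Y * A \<in> carrier_mat n n" using A Xc Yc by auto
  have e1: "A * X * A = A" "X * A * X = X" "(A * X)\<^sup>T = A * X" "(X * A)\<^sup>T = X * A"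
    using X unfolding is_penrose_inverse_def by blast+
  have e2: "A * Y * A = A" "Y * A * Y = Y" "(A * Y)\<^sup>T = A * Y" "(Y * A)\<^sup>T = Y * A"
    using Y unfolding is_penrose_inverse_def by blast+
  have s1: "X * (A * X) = X" using e1(2) assoc_mult_mat[OF Xc A Xc] by simp
  have s2: "X\<^sup>T * A\<^sup>T = A * X" using e1(3) transpose_mult[OF A Xc] by simp
  have s3: "A\<^sup>T * (A * Y) = A\<^sup>T"
  proof -
    have "(A * Y * A)\<^sup>T = A\<^sup>T * (A * Y)\<^sup>T" using transpose_mult[OF AY A] .
    thus ?thesis using e2(1) e2(3) by simp
  qed
  have "X = X * (X\<^sup>T * A\<^sup>T)" using s1 s2 by simp
  also have "\<dots> = X * (X\<^sup>T * (A\<^sup>T * (A * Y)))" using s3 by simp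
  also have "X\<^sup>T * (A\<^sup>T * (A * Y)) = (X\<^sup>T * A\<^sup>T) * (A * Y)"
    using assoc_mult_mat[OF XT AT AY] by simp
  also have "\<dots> = (A * X) * (A * Y)" using s2 by simp
  also have "X * ((A * X) * (A * Y)) = (X * (A * X)) * (A * Y)"
    using assoc_mult_mat[OF Xc AX AY] by simp
  also have "\<dots> = X * (A * Y)" using s1 by simp
  finally have r1: "X = X * (A * Y)" .
  have t1: "(Y * A) * Y = Y" using e2(2) by simp
  have t2: "A\<^sup>T * Y\<^sup>T = Y * A" using e2(4) transpose_mult[OF YA] transpose_mult[OF Yc A] by simp
  have t3: "(X * A) * A\<^sup>T = A\<^sup>T"
  proof -
    have "(A * (X * A))\<^sup>T = (X * A)\<^sup>T * A\<^sup>T" using transpose_mult[OF A XA] .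
    moreover have "A * (X * A) = A" using e1(1) assoc_mult_mat[OF A Xc A] by simp
    ultimately show ?thesis using e1(4) by simp
  qed
  have "Y = (A\<^sup>T * Y\<^sup>T) * Y" using t1 t2 by simp
  also have "\<dots> = (((X * A) * A\<^sup>T) * Y\<^sup>T) * Y" using t3 by simp
  also have "((X * A) * A\<^sup>T) * Y\<^sup>T = (X * A) * (A\<^sup>T * Y\<^sup>T)"
    using assoc_mult_mat[OF XA AT YT] by simp
  also have "\<dots> = (X * A) * (Y * A)" using t2 by simp
  also have "((X * A) * (Y * A)) * Y = (X * A) * ((Y * A) * Y)"
    using assoc_mult_mat[OF XA YA Yc] by simp
  also have "\<dots> = (X * A) * Y" using t1 by simp
  finally have r2: "Y = (X * A) * Y" .
  have "(X * A) * Y = X * (A * Y)" using assoc_mult_mat[OF Xc A Yc] .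
  thus ?thesis using r1 r2 by simp
qed

definition outer :: "real vec \<Rightarrow> real vec \<Rightarrow> real mat" where
  "outer u v = mat (dim_vec u) (dim_vec v) (\<lambda>(i,j). u$i * v$j)"

lemma outer_carrier[simp]: "outer u v \<in> carrier_mat (dim_vec u) (dim_vec v)"
  unfolding outer_def by auto

lemma outer_dims[simp]: "dim_row (outer u v) = dim_vec u" "dim_col (outer u v) = dim_vec v"
  unfolding outer_def by auto

lemma outer_index[simp]: "i < dim_vec u \<Longrightarrow> j < dim_vec v \<Longrightarrow> outer u v $$ (i,j) = u$i * v$j"
  unfolding outer_def by auto

lemma mult_outer: assumes "A \<in> carrier_mat nr n" "u \<in> carrier_vec n"
  shows "A * outer u v = outer (A *\<^sub>v u) v"
  using assms by (intro eq_matI, auto simp: scalar_prod_def sum_distrib_right mult.assoc)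

lemma outer_mult: assumes "B \<in> carrier_mat n nc" "v \<in> carrier_vec n"
  shows "outer u v * B = outer u (B\<^sup>T *\<^sub>v v)"
  using assms by (intro eq_matI, auto simp: scalar_prod_def sum_distrib_left ac_simps intro!: sum.cong)

lemma outer_mult_vec: assumes "v \<in> carrier_vec n" "w \<in> carrier_vec n"
  shows "outer u v *\<^sub>v w = (v \<bullet> w) \<cdot>\<^sub>v u"
  using assms by (intro eq_vecI, auto simp: scalar_prod_def sum_distrib_left sum_distrib_right mult.assoc mult.left_commute mult.commute)

lemma outer_outer: assumes "v \<in> carrier_vec n" "w \<in> carrier_vec n"
  shows "outer u v * outer w z = (v \<bullet> w) \<cdot>\<^sub>m outer u z"
  using assms by (intro eq_matI, auto simp: scalar_prod_def sum_distrib_left sum_distrib_right mult.assoc mult.left_commute mult.commute)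

lemma transpose_outer: "(outer u v)\<^sup>T = outer v u"
  by (intro eq_matI, auto simp: mult.commute)

lemma col_eq_mult_unit: assumes "(M :: real mat) \<in> carrier_mat m n" "k < n"
  shows "M *\<^sub>v unit_vec n k = col M k"
proof (rule eq_vecI)
  fix i assume i: "i < dim_vec (col M k)"
  have "(M *\<^sub>v unit_vec n k) $ i = (\<Sum>l<n. M $$ (i,l) * (if l = k then 1 else 0))"
    using assms i by (auto simp: scalar_prod_def unit_vec_def intro!: sum.cong)
  also have "\<dots> = M $$ (i,k)" using assms by (simp add: if_distrib sum.delta cong: if_cong)
  finally show "(M *\<^sub>v unit_vec n k) $ i = col M k $ i" using assms i by auto
qed (insert assms, auto)


lemma outer_zero_left[simp]: "outer (0\<^sub>v m) v = 0\<^sub>m m (dim_vec v)"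
  by (intro eq_matI, auto)
lemma outer_zero_right[simp]: "outer u (0\<^sub>v m) = 0\<^sub>m (dim_vec u) m"
  by (intro eq_matI, auto)

lemma self_scalar_pos: assumes r: "(r :: real vec) \<in> carrier_vec m" and nz: "r \<noteq> 0\<^sub>v m"
  shows "r \<bullet> r > 0"
proof -
  have ge: "r \<bullet> r \<ge> 0" by (auto simp: scalar_prod_def intro: sum_nonneg)
  have "r \<bullet> r \<noteq> 0"
  proof
    assume "r \<bullet> r = 0"
    hence "(\<Sum>i\<in>{0..<m}. r$i * r$i) = 0" using r by (auto simp: scalar_prod_def)
    hence "\<forall>i\<in>{0..<m}. r$i * r$i = 0" by (subst (asm) sum_nonneg_eq_0_iff, auto)
    hence "r = 0\<^sub>v m" using r by (intro eq_vecI, auto)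
    with nz show False by simp
  qed
  with ge show ?thesis by simp
qed

lemma proj_exists_k:
  assumes M: "(M :: real mat) \<in> carrier_mat m n" and k: "k \<le> n"
  shows "\<exists>P K. P \<in> carrier_mat m m \<and> K \<in> carrier_mat n m \<and> P\<^sup>T = P \<and> P * P = P \<and> P = M * K
     \<and> (\<forall>j<k. P *\<^sub>v col M j = col M j)"
  using k
proof (induct k)
  case 0
  show ?case
    by (rule exI[of _ "0\<^sub>m m m"], rule exI[of _ "0\<^sub>m n m"], insert M, auto simp: right_mult_zero_mat)
next
  case (Suc k)
  then obtain P K where Pc: "P \<in> carrier_mat m m" and Kc: "K \<in> carrier_mat n m" and sym: "P\<^sup>T = P"
    and idem: "P * P = P" and PMK: "P = M * K" and cols: "\<forall>j<k. P *\<^sub>v col M j = col M j" by auto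
  have kn: "k < n" using Suc by auto
  define c where "c = col M k"
  define r where "r = c - P *\<^sub>v c"
  have cc: "c \<in> carrier_vec m" unfolding c_def using M kn by auto
  have rc: "r \<in> carrier_vec m" unfolding r_def using cc Pc by auto
  have Pr: "P *\<^sub>v r = 0\<^sub>v m"
  proof -
    have "P *\<^sub>v r = P *\<^sub>v c - P *\<^sub>v (P *\<^sub>v c)" unfolding r_def using Pc cc
      by (simp add: mult_minus_distrib_mat_vec)
    also have "P *\<^sub>v (P *\<^sub>v c) = P *\<^sub>v c" using Pc cc idem by (metis assoc_mult_mat_vec)
    finally show ?thesis using Pc cc by (intro eq_vecI, auto)
  qed
  have PTr: "P\<^sup>T *\<^sub>v r = 0\<^sub>v m" using Pr sym by simp
  have rPv: "r \<bullet> (P *\<^sub>v v) = 0" if v: "v \<in> carrier_vec m" for v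
    using transpose_vec_mult_scalar[OF Pc v rc] PTr v by simp
  have c_eq: "c = r + P *\<^sub>v c" unfolding r_def using cc Pc by (intro eq_vecI, auto)
  show ?case
  proof (cases "r = 0\<^sub>v m")
    case True
    have "P *\<^sub>v c = c" using c_eq True Pc cc by (intro eq_vecI, auto)
    hence "\<forall>j<Suc k. P *\<^sub>v col M j = col M j" using cols c_def by (auto simp: less_Suc_eq)
    thus ?thesis using Pc Kc sym idem PMK by blast
  next
    case False
    define s where "s = r \<bullet> r"
    have s: "s > 0" unfolding s_def using self_scalar_pos[OF rc False] .
    define a where "a = 1 / s"
    define d where "d = unit_vec n k - K *\<^sub>v c"
    have dc: "d \<in> carrier_vec n" unfolding d_def using Kc cc by auto
    have Md: "M *\<^sub>v d = r"
    proof -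
      have "M *\<^sub>v d = M *\<^sub>v unit_vec n k - M *\<^sub>v (K *\<^sub>v c)" unfolding d_def using M Kc cc
        by (simp add: mult_minus_distrib_mat_vec)
      also have "M *\<^sub>v unit_vec n k = c" unfolding c_def using col_eq_mult_unit[OF M kn] .
      also have "M *\<^sub>v (K *\<^sub>v c) = P *\<^sub>v c" using PMK M Kc cc by (simp add: assoc_mult_mat_vec)
      finally show ?thesis unfolding r_def .
    qed
    define Ou where "Ou = outer r r"
    have Oc: "Ou \<in> carrier_mat m m" unfolding Ou_def using rc by (metis outer_carrier carrier_vecD)
    define P' where "P' = P + a \<cdot>\<^sub>m Ou"
    define K' where "K' = K + a \<cdot>\<^sub>m outer d r"
    have Pc': "P' \<in> carrier_mat m m" unfolding P'_def using Pc Oc by auto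
    have Kc': "K' \<in> carrier_mat n m" unfolding K'_def using Kc dc rc
      by (metis add_carrier_mat outer_carrier smult_carrier_mat carrier_vecD)
    have PMK': "P' = M * K'"
    proof -
      have "M * K' = M * K + M * (a \<cdot>\<^sub>m outer d r)" unfolding K'_def using M Kc dc rc
        by (metis mult_add_distrib_mat outer_carrier smult_carrier_mat carrier_vecD)
      also have "M * (a \<cdot>\<^sub>m outer d r) = a \<cdot>\<^sub>m (M * outer d r)" using M dc rc
        by (metis mult_smult_distrib outer_carrier carrier_vecD)
      also have "M * outer d r = Ou" unfolding Ou_def using mult_outer[OF M dc] Md by simp
      finally show ?thesis unfolding P'_def PMK by simp
    qed
    have sym': "P'\<^sup>T = P'"
    proof (rule eq_matI)
      fix i j assume "i < dim_row P'" "j < dim_col P'"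
      hence ij: "i < m" "j < m" using Pc' by auto
      have "P $$ (j,i) = P $$ (i,j)" using arg_cong[OF sym, of "\<lambda>X. X $$ (i,j)"] ij Pc by auto
      thus "P'\<^sup>T $$ (i,j) = P' $$ (i,j)" using ij Pc rc unfolding P'_def Ou_def by (auto simp: ac_simps)
    qed (insert Pc', auto)
    have PO: "P * Ou = 0\<^sub>m m m" unfolding Ou_def using mult_outer[OF Pc rc] Pr rc by simp
    have OP: "Ou * P = 0\<^sub>m m m" unfolding Ou_def using outer_mult[OF Pc rc] PTr rc by simp
    have OO: "Ou * Ou = s \<cdot>\<^sub>m Ou" unfolding Ou_def s_def using outer_outer[OF rc rc] by simp
    have idem': "P' * P' = P'"
    proof -
      have "P' * P' = P * P + P * (a \<cdot>\<^sub>m Ou) + ((a \<cdot>\<^sub>m Ou) * P + (a \<cdot>\<^sub>m Ou) * (a \<cdot>\<^sub>m Ou))"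
      proof -
        have aO: "a \<cdot>\<^sub>m Ou \<in> carrier_mat m m" using Oc by simp
        have "P' * P' = P * (P + a \<cdot>\<^sub>m Ou) + (a \<cdot>\<^sub>m Ou) * (P + a \<cdot>\<^sub>m Ou)"
          unfolding P'_def using add_mult_distrib_mat[OF Pc aO add_carrier_mat[OF aO, of P]] .
        also have "P * (P + a \<cdot>\<^sub>m Ou) = P * P + P * (a \<cdot>\<^sub>m Ou)"
          by (rule mult_add_distrib_mat[OF Pc Pc aO])
        also have "(a \<cdot>\<^sub>m Ou) * (P + a \<cdot>\<^sub>m Ou) = (a \<cdot>\<^sub>m Ou) * P + (a \<cdot>\<^sub>m Ou) * (a \<cdot>\<^sub>m Ou)"
          by (rule mult_add_distrib_mat[OF aO Pc aO])
        finally show ?thesis .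
      qed
      also have "P * (a \<cdot>\<^sub>m Ou) = 0\<^sub>m m m" using mult_smult_distrib[OF Pc Oc] PO by simp
      also have "(a \<cdot>\<^sub>m Ou) * P = 0\<^sub>m m m" using mult_smult_assoc_mat[OF Oc Pc] OP by simp
      also have "(a \<cdot>\<^sub>m Ou) * (a \<cdot>\<^sub>m Ou) = (a * a * s) \<cdot>\<^sub>m Ou"
      proof -
        have aO: "a \<cdot>\<^sub>m Ou \<in> carrier_mat m m" using Oc by simp
        have "(a \<cdot>\<^sub>m Ou) * (a \<cdot>\<^sub>m Ou) = a \<cdot>\<^sub>m (a \<cdot>\<^sub>m (s \<cdot>\<^sub>m Ou))"
          using mult_smult_assoc_mat[OF Oc aO] mult_smult_distrib[OF Oc Oc] OO by simp
        also have "\<dots> = (a * a * s) \<cdot>\<^sub>m Ou" by (intro eq_matI, auto)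
        finally show ?thesis .
      qed
      also have "a * a * s = a" unfolding a_def using s by simp
      finally show ?thesis unfolding P'_def using idem Pc Oc by simp
    qed
    have colP': "P' *\<^sub>v v = P *\<^sub>v v + (a * (r \<bullet> v)) \<cdot>\<^sub>v r" if v: "v \<in> carrier_vec m" for v
    proof -
      have "P' *\<^sub>v v = P *\<^sub>v v + (a \<cdot>\<^sub>m Ou) *\<^sub>v v" unfolding P'_def using Pc Oc v
        by (simp add: add_mult_distrib_mat_vec)
      also have "(a \<cdot>\<^sub>m Ou) *\<^sub>v v = a \<cdot>\<^sub>v (Ou *\<^sub>v v)" using Oc v by (intro eq_vecI, auto simp: scalar_prod_def sum_distrib_left ac_simps)
      also have "Ou *\<^sub>v v = (r \<bullet> v) \<cdot>\<^sub>v r" unfolding Ou_def using outer_mult_vec[OF rc v] .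
      finally show ?thesis by (simp add: smult_smult_assoc)
    qed
    have cols': "\<forall>j<Suc k. P' *\<^sub>v col M j = col M j"
    proof (intro allI impI)
      fix j assume j: "j < Suc k"
      have colc: "col M j \<in> carrier_vec m" using M j kn by auto
      show "P' *\<^sub>v col M j = col M j"
      proof (cases "j < k")
        case True
        have "r \<bullet> col M j = 0" using rPv[OF colc] cols True by simp
        hence "P' *\<^sub>v col M j = col M j + 0 \<cdot>\<^sub>v r" using colP'[OF colc] cols True colc by simp
        also have "\<dots> = col M j" using colc rc M by (intro eq_vecI, auto)
        finally show ?thesis .
      next
        case False
        hence jk: "j = k" using j by simp
        have "r \<bullet> c = s" unfolding s_def
          using c_eq rc Pc cc rPv[OF cc] by (metis scalar_prod_add_distrib mult_mat_vec_carrier add.right_neutral)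
        hence "P' *\<^sub>v c = P *\<^sub>v c + r" using colP'[OF cc] s unfolding a_def by simp
        also have "\<dots> = c" unfolding r_def using Pc cc by (intro eq_vecI, auto)
        finally show ?thesis using jk c_def by simp
      qed
    qed
    show ?thesis using Pc' Kc' sym' idem' PMK' cols' by blast
  qed
qed

lemma proj_exists:
  assumes M: "(M :: real mat) \<in> carrier_mat m n"
  shows "\<exists>P K. P \<in> carrier_mat m m \<and> K \<in> carrier_mat n m \<and> P\<^sup>T = P \<and> P = M * K \<and> P * M = M"
proof -
  obtain P K where Pc: "P \<in> carrier_mat m m" and Kc: "K \<in> carrier_mat n m" and sym: "P\<^sup>T = P"
    and PMK: "P = M * K" and cols: "\<forall>j<n. P *\<^sub>v col M j = col M j"
    using proj_exists_k[OF M le_refl] by blast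
  have "P * M = M"
  proof (rule eq_matI)
    fix i j assume ij: "i < dim_row M" "j < dim_col M"
    have "(P *\<^sub>v col M j) $ i = col M j $ i" using cols ij M by auto
    thus "(P * M) $$ (i,j) = M $$ (i,j)" using ij M Pc by auto
  qed (insert Pc M, auto)
  thus ?thesis using Pc Kc sym PMK by blast
qed

lemma penrose_exists: "\<exists>X. is_penrose_inverse (A :: real mat) X"
proof -
  define m where "m = dim_row A"
  define n where "n = dim_col A"
  have A: "A \<in> carrier_mat m n" unfolding m_def n_def by auto
  have AT: "A\<^sup>T \<in> carrier_mat n m" using A by auto
  obtain PR KR where PRc: "PR \<in> carrier_mat m m" and KRc: "KR \<in> carrier_mat n m" and PRs: "PR\<^sup>T = PR"
    and PRK: "PR = A * KR" and PRA: "PR * A = A" using proj_exists[OF A] by blast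
  obtain PC KC where PCc: "PC \<in> carrier_mat n n" and KCc: "KC \<in> carrier_mat m n" and PCs: "PC\<^sup>T = PC"
    and PCK: "PC = A\<^sup>T * KC" and PCA: "PC * A\<^sup>T = A\<^sup>T" using proj_exists[OF AT] by blast
  define X where "X = PC * KR"
  have Xc: "X \<in> carrier_mat n m" unfolding X_def using PCc KRc by auto
  have APC: "A * PC = A"
  proof -
    have "(PC * A\<^sup>T)\<^sup>T = A * PC\<^sup>T" using transpose_mult[OF PCc AT] by simp
    thus ?thesis using PCA PCs by simp
  qed
  have PCt: "PC = KC\<^sup>T * A"
  proof -
    have "PC = (A\<^sup>T * KC)\<^sup>T" using PCs PCK by simp
    also have "\<dots> = KC\<^sup>T * A" using transpose_mult[OF AT KCc] by simp
    finally show ?thesis .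
  qed
  have AX: "A * X = PR" unfolding X_def PRK assoc_mult_mat[OF A PCc KRc, symmetric] APC by (rule refl)
  have XA: "X * A = PC"
  proof -
    have "X * A = KC\<^sup>T * A * KR * A" unfolding X_def PCt by (rule refl)
    also have "\<dots> = KC\<^sup>T * ((A * KR) * A)"
    proof -
      have KT: "KC\<^sup>T \<in> carrier_mat n m" using KCc by auto
      have "KC\<^sup>T * A * KR = KC\<^sup>T * (A * KR)" using assoc_mult_mat[OF KT A KRc] .
      moreover have "KC\<^sup>T * (A * KR) * A = KC\<^sup>T * ((A * KR) * A)"
        using assoc_mult_mat[OF KT mult_carrier_mat[OF A KRc] A] .
      ultimately show ?thesis by simp
    qed
    also have "\<dots> = PC" unfolding PRK[symmetric] PRA PCt by (rule refl)
    finally show ?thesis .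
  qed
  have PCPC: "PC * PC = PC"
  proof -
    have KT: "KC\<^sup>T \<in> carrier_mat n m" using KCc by auto
    have e: "(KC\<^sup>T * A) * PC = KC\<^sup>T * (A * PC)" using assoc_mult_mat[OF KT A PCc] .
    have "PC * PC = KC\<^sup>T * (A * PC)" using e unfolding PCt[symmetric] .
    thus ?thesis unfolding APC PCt[symmetric] .
  qed
  have "is_penrose_inverse A X" unfolding is_penrose_inverse_def
  proof (intro conjI)
    show "X \<in> carrier_mat (dim_col A) (dim_row A)" using Xc m_def n_def by simp
    show "A * X * A = A" using AX PRA by simp
    show "X * A * X = X" unfolding XA unfolding X_def assoc_mult_mat[OF PCc PCc KRc, symmetric] PCPC by (rule refl)
    show "(A * X)\<^sup>T = A * X" using AX PRs by simp
    show "(X * A)\<^sup>T = X * A" using XA PCs by simp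
  qed
  thus ?thesis by blast
qed

lemma pinv_penrose: "is_penrose_inverse A (pinv A)"
proof -
  obtain X where X: "is_penrose_inverse A X" using penrose_exists by blast
  have "\<exists>!X. is_penrose_inverse A X" using X penrose_unique by blast
  thus ?thesis unfolding pinv_def by (rule theI')
qed

lemma pinv_carrier: "A \<in> carrier_mat m n \<Longrightarrow> pinv A \<in> carrier_mat n m"
proof -
  assume A: "A \<in> carrier_mat m n"
  have "pinv A \<in> carrier_mat (dim_col A) (dim_row A)"
    using pinv_penrose[of A] unfolding is_penrose_inverse_def by blast
  thus ?thesis using A by auto
qed

lemma pinv_eqs: "A * pinv A * A = A" "pinv A * A * pinv A = pinv A"
  "(A * pinv A)\<^sup>T = A * pinv A" "(pinv A * A)\<^sup>T = pinv A * A"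
  using pinv_penrose[of A] unfolding is_penrose_inverse_def by blast+

lemma fix_range:
  fixes B C :: "real mat"
  assumes B: "B \<in> carrier_mat m n" and C: "C \<in> carrier_mat m k"
    and cols: "\<And>j. j < k \<Longrightarrow> col C j \<in> mat_range B"
  shows "B * pinv B * C = C"
proof -
  have Bd: "pinv B \<in> carrier_mat n m" using pinv_carrier[OF B] .
  have BB: "B * pinv B \<in> carrier_mat m m" using B Bd by auto
  show ?thesis
  proof (rule mat_col_eqI)
    fix j assume j: "j < dim_col C"
    hence jk: "j < k" using C by auto
    obtain x where x: "x \<in> carrier_vec n" and cx: "col C j = B *\<^sub>v x"
      using cols[OF jk] B unfolding mat_range_def by auto
    have "col (B * pinv B * C) j = (B * pinv B) *\<^sub>v col C j" using col_mult2[OF BB C jk] .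
    also have "\<dots> = (B * pinv B * B) *\<^sub>v x" unfolding cx using assoc_mult_mat_vec[OF BB B x] by simp
    also have "\<dots> = col C j" unfolding cx pinv_eqs(1) ..
    finally show "col (B * pinv B * C) j = col C j" .
  qed (insert B C Bd, auto)
qed

lemma null_fix:
  fixes B C :: "real mat"
  assumes B: "B \<in> carrier_mat m n" and C: "C \<in> carrier_mat k n"
    and nul: "mat_null B \<subseteq> mat_null C"
  shows "C * (pinv B * B) = C"
proof -
  have Bd: "pinv B \<in> carrier_mat n m" using pinv_carrier[OF B] .
  have BB: "pinv B * B \<in> carrier_mat n n" using B Bd by auto
  show ?thesis
  proof (rule mat_col_eqI)
    fix j assume j: "j < dim_col C"
    hence jn: "j < n" using C by auto
    define e :: "real vec" where "e = unit_vec n j"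
    have e: "e \<in> carrier_vec n" unfolding e_def by simp
    define w where "w = e - (pinv B * B) *\<^sub>v e"
    have w: "w \<in> carrier_vec n" unfolding w_def using e BB by auto
    have "B *\<^sub>v w = B *\<^sub>v e - B *\<^sub>v ((pinv B * B) *\<^sub>v e)" unfolding w_def
      using B e BB by (simp add: mult_minus_distrib_mat_vec)
    also have "B *\<^sub>v ((pinv B * B) *\<^sub>v e) = (B * (pinv B * B)) *\<^sub>v e"
      using assoc_mult_mat_vec[OF B BB e] by simp
    also have "B * (pinv B * B) = B" using assoc_mult_mat[OF B Bd B] pinv_eqs(1)[of B] by simp
    finally have "B *\<^sub>v w = 0\<^sub>v m" using B e by (intro eq_vecI, auto)
    hence "w \<in> mat_null B" unfolding mat_null_def using B w by (intro mat_kernelI, auto)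
    hence "w \<in> mat_null C" using nul by auto
    hence Cw: "C *\<^sub>v w = 0\<^sub>v k" unfolding mat_null_def using mat_kernelD[OF C] by auto
    have wexp: "C *\<^sub>v w = C *\<^sub>v e - C *\<^sub>v ((pinv B * B) *\<^sub>v e)" unfolding w_def
      using C e BB by (simp add: mult_minus_distrib_mat_vec)
    have eq: "C *\<^sub>v e = C *\<^sub>v ((pinv B * B) *\<^sub>v e)"
    proof (rule eq_vecI)
      fix i assume i: "i < dim_vec (C *\<^sub>v ((pinv B * B) *\<^sub>v e))"
      hence ik: "i < k" using C by auto
      have "(C *\<^sub>v w) $ i = 0" using Cw ik by simp
      hence "(C *\<^sub>v e - C *\<^sub>v ((pinv B * B) *\<^sub>v e)) $ i = 0" using wexp by simp
      thus "(C *\<^sub>v e) $ i = (C *\<^sub>v ((pinv B * B) *\<^sub>v e)) $ i" using ik C by simp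
    qed (insert C, auto)
    have "col (C * (pinv B * B)) j = C *\<^sub>v col (pinv B * B) j" using col_mult2[OF C BB jn] .
    also have "col (pinv B * B) j = (pinv B * B) *\<^sub>v e" unfolding e_def using col_eq_mult_unit[OF BB jn] by simp
    also have "C *\<^sub>v \<dots> = C *\<^sub>v e" using eq by simp
    also have "\<dots> = col C j" unfolding e_def using col_eq_mult_unit[OF C jn] .
    finally show "col (C * (pinv B * B)) j = col C j" .
  qed (insert B C Bd, auto)
qed

lemma sym_proj_eq:
  fixes E F :: "real mat"
  assumes E: "E \<in> carrier_mat n n" and F: "F \<in> carrier_mat n n"
    and Es: "E\<^sup>T = E" and Fs: "F\<^sup>T = F" and FE: "F * E = E" and EF: "E * F = F"
  shows "E = F"
proof -
  have "E = (F * E)\<^sup>T" using FE Es by simp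
  also have "\<dots> = E\<^sup>T * F\<^sup>T" using transpose_mult[OF F E] .
  also have "\<dots> = F" using Es Fs EF by simp
  finally show ?thesis .
qed

lemma sym_proj_eq2:
  fixes E F :: "real mat"
  assumes E: "E \<in> carrier_mat n n" and F: "F \<in> carrier_mat n n"
    and Es: "E\<^sup>T = E" and Fs: "F\<^sup>T = F" and FE: "F * E = F" and EF: "E * F = E"
  shows "E = F"
proof -
  have "E = (E * F)\<^sup>T" using EF Es by simp
  also have "\<dots> = F\<^sup>T * E\<^sup>T" using transpose_mult[OF E F] .
  also have "\<dots> = F" using Es Fs FE by simp
  finally show ?thesis .
qed

lemma proper_identity:
  fixes A P :: "real mat"
  assumes A: "A \<in> carrier_mat m n" and P: "P \<in> carrier_mat m n"
    and rng: "mat_range P = mat_range A" and nul: "mat_null P = mat_null A"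
  shows "pinv A - pinv P * (P - A) * pinv A = pinv P"
proof -
  define G where "G = pinv P"
  define Ad where "Ad = pinv A"
  have G: "G \<in> carrier_mat n m" unfolding G_def using pinv_carrier[OF P] .
  have Ad: "Ad \<in> carrier_mat n m" unfolding Ad_def using pinv_carrier[OF A] .
  have PG: "P * G \<in> carrier_mat m m" and AAd: "A * Ad \<in> carrier_mat m m" using P G A Ad by auto
  have GP: "G * P \<in> carrier_mat n n" and AdA: "Ad * A \<in> carrier_mat n n" using P G A Ad by auto
  have colPG: "col (P * G) j \<in> mat_range P" if "j < m" for j
    using col_mult2[OF P G that] G that unfolding mat_range_def using P by auto
  have colAAd: "col (A * Ad) j \<in> mat_range A" if "j < m" for j
    using col_mult2[OF A Ad that] Ad that unfolding mat_range_def using A by auto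
  have E1: "A * Ad = P * G"
  proof (rule sym_proj_eq[OF AAd PG])
    show "(A * Ad)\<^sup>T = A * Ad" unfolding Ad_def by (rule pinv_eqs(3))
    show "(P * G)\<^sup>T = P * G" unfolding G_def by (rule pinv_eqs(3))
    show "P * G * (A * Ad) = A * Ad" unfolding G_def
      by (rule fix_range[OF P AAd], insert colAAd rng, auto)
    show "A * Ad * (P * G) = P * G" unfolding Ad_def
      by (rule fix_range[OF A PG], insert colPG rng, auto)
  qed
  have E2: "Ad * A = G * P"
  proof (rule sym_proj_eq2[OF AdA GP])
    show "(Ad * A)\<^sup>T = Ad * A" unfolding Ad_def by (rule pinv_eqs(4))
    show "(G * P)\<^sup>T = G * P" unfolding G_def by (rule pinv_eqs(4))
    have "(G * P) * (Ad * A) = G * (P * (Ad * A))" using assoc_mult_mat[OF G P AdA] .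
    also have "P * (Ad * A) = P" unfolding Ad_def using null_fix[OF A P] nul by simp
    finally show "G * P * (Ad * A) = G * P" .
    have "(Ad * A) * (G * P) = Ad * (A * (G * P))" using assoc_mult_mat[OF Ad A GP] .
    also have "A * (G * P) = A" unfolding G_def using null_fix[OF P A] nul by simp
    finally show "Ad * A * (G * P) = Ad * A" .
  qed
  have GA: "G * A \<in> carrier_mat n n" using G A by auto
  have "G * (P - A) * Ad = (G * P - G * A) * Ad" using mult_minus_distrib_mat[OF G P A] by simp
  also have "\<dots> = G * P * Ad - G * A * Ad" using minus_mult_distrib_mat[OF GP GA Ad] .
  also have "G * P * Ad = Ad" unfolding E2[symmetric] unfolding Ad_def by (rule pinv_eqs(2))
  also have "G * A * Ad = G * (A * Ad)" using assoc_mult_mat[OF G A Ad] .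
  also have "\<dots> = G * P * G" unfolding E1 using assoc_mult_mat[OF G P G] by simp
  also have "\<dots> = G" unfolding G_def by (rule pinv_eqs(2))
  finally have eq: "G * (P - A) * Ad = Ad - G" .
  have "Ad - G * (P - A) * Ad = G" unfolding eq using Ad G by (intro eq_matI, auto)
  thus ?thesis unfolding G_def Ad_def .
qed

definition nonneg :: "real mat \<Rightarrow> bool" where
  "nonneg M \<longleftrightarrow> (\<forall>i<dim_row M. \<forall>j<dim_col M. 0 \<le> M $$ (i,j))"

lemma nonneg_mult: assumes "nonneg A" "nonneg B" "A \<in> carrier_mat nr n" "B \<in> carrier_mat n nc"
  shows "nonneg (A * B)"
  using assms unfolding nonneg_def by (auto simp: scalar_prod_def intro!: sum_nonneg)

lemma nonneg_pow: assumes "nonneg X" "X \<in> carrier_mat n n"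
  shows "nonneg (X ^\<^sub>m k)"
proof (induct k)
  case 0 thus ?case using assms unfolding nonneg_def by auto
next
  case (Suc k)
  thus ?case using nonneg_mult[OF Suc assms(1) pow_carrier_mat[OF assms(2)] assms(2)] by simp
qed

lemma mv_mono: assumes M: "nonneg M" "M \<in> carrier_mat nr nc" and u: "u \<in> carrier_vec nc" and v: "v \<in> carrier_vec nc"
  and le: "\<And>j. j < nc \<Longrightarrow> u $ j \<le> v $ j" and i: "i < nr"
  shows "(M *\<^sub>v u) $ i \<le> (M *\<^sub>v v) $ i"
  using assms unfolding nonneg_def by (auto simp: scalar_prod_def intro!: sum_mono mult_left_mono)

lemma mv_nonneg: assumes M: "nonneg M" "M \<in> carrier_mat nr nc" and u: "u \<in> carrier_vec nc"
  and le: "\<And>j. j < nc \<Longrightarrow> 0 \<le> u $ j" and i: "i < nr"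
  shows "0 \<le> (M *\<^sub>v u) $ i"
  using assms unfolding nonneg_def by (auto simp: scalar_prod_def intro!: sum_nonneg)

lemma no_sub:
  fixes G Ad Q X :: "real mat"
  assumes G: "G \<in> carrier_mat n m" and Ad: "Ad \<in> carrier_mat n m" and Q: "Q \<in> carrier_mat m n"
    and Gn: "nonneg G" and Adn: "nonneg Ad" and XGQ: "X = G * Q" and Xn: "nonneg X"
    and id: "Ad - X * Ad = G"
    and u: "u \<in> carrier_vec n" and u0: "\<And>i. i < n \<Longrightarrow> 0 \<le> u $ i"
    and uX: "\<And>i. i < n \<Longrightarrow> u $ i \<le> (X *\<^sub>v u) $ i"
  shows "u = 0\<^sub>v n"
proof -
  have Xc: "X \<in> carrier_mat n n" using XGQ G Q by auto
  define D where "D k = Ad - X ^\<^sub>m k * Ad" for k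
  have Dc: "D k \<in> carrier_mat n m" for k unfolding D_def using Ad Xc by auto
  have XAd: "X * Ad = Ad - G"
  proof (rule eq_matI)
    fix i j assume ij: "i < dim_row (Ad - G)" "j < dim_col (Ad - G)"
    have "(Ad - X * Ad) $$ (i,j) = G $$ (i,j)" using id by simp
    thus "(X * Ad) $$ (i,j) = (Ad - G) $$ (i,j)" using ij Ad G Xc by auto
  qed (insert Ad G Xc, auto)
  have X0: "X ^\<^sub>m 0 * Ad = Ad" using Xc left_mult_one_mat[OF Ad] by simp
  have D0: "D 0 = 0\<^sub>m n m" unfolding D_def X0 using Ad by (intro eq_matI, auto)
  have Dsuc: "D (Suc k) = D k + X ^\<^sub>m k * G" for k
  proof -
    have Xk: "X ^\<^sub>m k \<in> carrier_mat n n" using Xc by auto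
    have "X ^\<^sub>m Suc k * Ad = X ^\<^sub>m k * (X * Ad)" using assoc_mult_mat[OF Xk Xc Ad] by simp
    also have "\<dots> = X ^\<^sub>m k * Ad - X ^\<^sub>m k * G" unfolding XAd using mult_minus_distrib_mat[OF Xk Ad G] .
    finally have e: "X ^\<^sub>m Suc k * Ad = X ^\<^sub>m k * Ad - X ^\<^sub>m k * G" .
    show ?thesis unfolding D_def e using Xk Ad G by (intro eq_matI, auto)
  qed
  have Dnn: "nonneg (D k)" for k
  proof (induct k)
    case 0 thus ?case unfolding D0 nonneg_def by auto
  next
    case (Suc k)
    have "nonneg (X ^\<^sub>m k * G)" using nonneg_mult[OF nonneg_pow[OF Xn Xc] Gn pow_carrier_mat[OF Xc] G] .
    thus ?case unfolding Dsuc using Suc Dc[of k] G Xc unfolding nonneg_def by auto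
  qed
  have Dle: "D k $$ (i,j) \<le> Ad $$ (i,j)" if "i < n" "j < m" for k i j
  proof -
    have "nonneg (X ^\<^sub>m k * Ad)" using nonneg_mult[OF nonneg_pow[OF Xn Xc] Adn pow_carrier_mat[OF Xc] Ad] .
    thus ?thesis unfolding D_def using that Ad Xc unfolding nonneg_def by auto
  qed
  have upow: "u $ i \<le> (X ^\<^sub>m j *\<^sub>v u) $ i" if "i < n" for i j
    using that
  proof (induct j arbitrary: i)
    case 0 thus ?case using u Xc by auto
  next
    case (Suc j)
    have Xj: "X ^\<^sub>m j \<in> carrier_mat n n" using Xc by auto
    have "X ^\<^sub>m Suc j *\<^sub>v u = X ^\<^sub>m j *\<^sub>v (X *\<^sub>v u)" using assoc_mult_mat_vec[OF Xj Xc u] by simp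
    moreover have "(X ^\<^sub>m j *\<^sub>v u) $ i \<le> (X ^\<^sub>m j *\<^sub>v (X *\<^sub>v u)) $ i"
      by (rule mv_mono[OF nonneg_pow[OF Xn Xc] Xj u], insert Xc u uX Suc, auto)
    ultimately show ?case using Suc by force
  qed
  define z where "z = Q *\<^sub>v u"
  have z: "z \<in> carrier_vec m" unfolding z_def using Q u by auto
  have Gz: "G *\<^sub>v z = X *\<^sub>v u" unfolding z_def XGQ using assoc_mult_mat_vec[OF G Q u] by simp
  have grow: "real k * u $ i \<le> (D k *\<^sub>v z) $ i" if "i < n" for k i
    using that
  proof (induct k arbitrary: i)
    case 0
    show ?case unfolding D0 using 0 z by (simp add: scalar_prod_def)
  next
    case (Suc k)
    have Xk: "X ^\<^sub>m k \<in> carrier_mat n n" using Xc by auto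
    have XkG: "X ^\<^sub>m k * G \<in> carrier_mat n m" using Xk G by auto
    have "D (Suc k) *\<^sub>v z = D k *\<^sub>v z + (X ^\<^sub>m k * G) *\<^sub>v z"
      unfolding Dsuc using add_mult_distrib_mat_vec[OF Dc XkG z] .
    also have "(X ^\<^sub>m k * G) *\<^sub>v z = X ^\<^sub>m k *\<^sub>v (X *\<^sub>v u)" using assoc_mult_mat_vec[OF Xk G z] Gz by simp
    also have "\<dots> = X ^\<^sub>m Suc k *\<^sub>v u" using assoc_mult_mat_vec[OF Xk Xc u] by simp
    finally have e: "(D (Suc k) *\<^sub>v z) $ i = (D k *\<^sub>v z) $ i + (X ^\<^sub>m Suc k *\<^sub>v u) $ i"
      using Suc Dc[of k] Xc u by simp
    show ?case unfolding e using Suc(1)[OF Suc(2)] upow[OF Suc(2), of "Suc k"] by (simp add: algebra_simps)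
  qed
  define Cb where "Cb i = (\<Sum>j<m. Ad $$ (i,j) * \<bar>z $ j\<bar>)" for i
  have bnd: "(D k *\<^sub>v z) $ i \<le> Cb i" if "i < n" for k i
  proof -
    have "(D k *\<^sub>v z) $ i = (\<Sum>j<m. D k $$ (i,j) * z $ j)"
      using that Dc[of k] z by (auto simp: scalar_prod_def lessThan_atLeast0 intro!: sum.cong)
    also have "\<dots> \<le> (\<Sum>j<m. Ad $$ (i,j) * \<bar>z $ j\<bar>)"
    proof (rule sum_mono)
      fix j assume j: "j \<in> {..<m}"
      have d0: "0 \<le> D k $$ (i,j)" using Dnn[of k] Dc[of k] that j unfolding nonneg_def by auto
      have "D k $$ (i,j) * z $ j \<le> D k $$ (i,j) * \<bar>z $ j\<bar>" using d0 by (simp add: mult_left_mono)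
      also have "\<dots> \<le> Ad $$ (i,j) * \<bar>z $ j\<bar>" using Dle[OF that] j by (simp add: mult_right_mono)
      finally show "D k $$ (i,j) * z $ j \<le> Ad $$ (i,j) * \<bar>z $ j\<bar>" .
    qed
    finally show ?thesis unfolding Cb_def .
  qed
  show ?thesis
  proof (rule eq_vecI)
    fix i assume "i < dim_vec (0\<^sub>v n :: real vec)"
    hence i: "i < n" by simp
    have "\<not> u $ i > 0"
    proof
      assume pos: "u $ i > 0"
      obtain k where "Cb i < real k * u $ i" using reals_Archimedean3[OF pos] by blast
      with grow[OF i, of k] bnd[OF i, of k] show False by simp
    qed
    thus "u $ i = 0\<^sub>v n $ i" using u0[OF i] i by simp
  qed (insert u, auto)
qed

lemma norm_mv_le:
  fixes M :: "real mat" and z :: "complex vec"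
  assumes M: "M \<in> carrier_mat nr nc" "nonneg M" and z: "z \<in> carrier_vec nc" and i: "i < nr"
  shows "norm ((map_mat complex_of_real M *\<^sub>v z) $ i) \<le> (M *\<^sub>v vec nc (\<lambda>j. norm (z $ j))) $ i"
proof -
  have "(map_mat complex_of_real M *\<^sub>v z) $ i = (\<Sum>j<nc. complex_of_real (M $$ (i,j)) * z $ j)"
    using M z i by (auto simp: scalar_prod_def lessThan_atLeast0 intro!: sum.cong)
  hence "norm ((map_mat complex_of_real M *\<^sub>v z) $ i) \<le> (\<Sum>j<nc. norm (complex_of_real (M $$ (i,j)) * z $ j))"
    by (simp add: norm_sum)
  also have "\<dots> = (\<Sum>j<nc. M $$ (i,j) * norm (z $ j))"
    using M i unfolding nonneg_def by (auto simp: norm_mult intro!: sum.cong)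
  also have "\<dots> = (M *\<^sub>v vec nc (\<lambda>j. norm (z $ j))) $ i"
    using M z i by (auto simp: scalar_prod_def lessThan_atLeast0 intro!: sum.cong)
  finally show ?thesis .
qed

lemma rho_eigen:
  fixes M :: "real mat"
  assumes M: "M \<in> carrier_mat n n" and n: "n > 0"
  shows "\<exists>lam w. w \<in> carrier_vec n \<and> w \<noteq> 0\<^sub>v n \<and> map_mat complex_of_real M *\<^sub>v w = lam \<cdot>\<^sub>v w \<and> rho M = norm lam"
proof -
  have Mc: "map_mat complex_of_real M \<in> carrier_mat n n" using M by auto
  obtain lam where "lam \<in> spectrum (map_mat complex_of_real M)" and r: "rho M = norm lam"
    using spectral_radius_mem_max(1)[OF Mc n] unfolding rho_def by auto
  then obtain w where "eigenvector (map_mat complex_of_real M) w lam"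
    unfolding spectrum_def eigenvalue_def by auto
  thus ?thesis unfolding eigenvector_def using r M by auto
qed

lemma rho_nonneg: "M \<in> carrier_mat n n \<Longrightarrow> n > 0 \<Longrightarrow> rho M \<ge> 0"
  using rho_eigen[of M n] by auto

lemma rho_le:
  fixes M :: "real mat"
  assumes M: "M \<in> carrier_mat n n" "nonneg M" and n: "n > 0"
    and v: "v \<in> carrier_vec n" and vpos: "\<And>i. i < n \<Longrightarrow> v $ i > 0"
    and Mv: "\<And>i. i < n \<Longrightarrow> (M *\<^sub>v v) $ i \<le> s * v $ i"
  shows "rho M \<le> s"
proof -
  obtain lam w where w: "w \<in> carrier_vec n" and w0: "w \<noteq> 0\<^sub>v n"
    and ev: "map_mat complex_of_real M *\<^sub>v w = lam \<cdot>\<^sub>v w" and r: "rho M = norm lam"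
    using rho_eigen[OF M(1) n] by auto
  define f where "f i = norm (w $ i) / v $ i" for i
  have fin: "finite (f ` {..<n})" and ne: "f ` {..<n} \<noteq> {}" using n by auto
  obtain i0 where i0: "i0 < n" and fmax: "\<And>i. i < n \<Longrightarrow> f i \<le> f i0"
  proof -
    have "Max (f ` {..<n}) \<in> f ` {..<n}" using Max_in[OF fin ne] .
    then obtain i0 where i0: "i0 < n" and eq: "Max (f ` {..<n}) = f i0" by auto
    show ?thesis by (rule that[OF i0], unfold eq[symmetric], rule Max_ge[OF fin], auto)
  qed
  have "\<exists>i<n. w $ i \<noteq> 0"
  proof (rule ccontr)
    assume "\<not> ?thesis"
    hence "w = 0\<^sub>v n" using w by (intro eq_vecI, auto)
    with w0 show False by simp
  qed
  then obtain i1 where i1: "i1 < n" "w $ i1 \<noteq> 0" by auto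
  have "f i1 > 0" unfolding f_def using i1 vpos[OF i1(1)] by auto
  hence t: "f i0 > 0" using fmax[OF i1(1)] by simp
  define t where "t = f i0"
  have wle: "norm (w $ j) \<le> t * v $ j" if "j < n" for j
    using fmax[OF that] vpos[OF that] unfolding t_def f_def by (simp add: divide_le_eq)
  have "norm lam * norm (w $ i0) = norm ((map_mat complex_of_real M *\<^sub>v w) $ i0)"
    using ev i0 w by (simp add: norm_mult)
  also have "\<dots> \<le> (M *\<^sub>v vec n (\<lambda>j. norm (w $ j))) $ i0" using norm_mv_le[OF M w i0] .
  also have "\<dots> \<le> (M *\<^sub>v (t \<cdot>\<^sub>v v)) $ i0"
    by (rule mv_mono[OF M(2) M(1)], insert v wle i0, auto)
  also have "\<dots> = t * (M *\<^sub>v v) $ i0" using M v i0 by simp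
  also have "\<dots> \<le> t * (s * v $ i0)" using Mv[OF i0] t unfolding t_def by (simp add: mult_left_mono)
  also have "\<dots> = s * norm (w $ i0)" unfolding t_def f_def using vpos[OF i0] by simp
  finally have "norm lam * norm (w $ i0) \<le> s * norm (w $ i0)" .
  moreover have "norm (w $ i0) > 0" using t vpos[OF i0] unfolding f_def by (simp add: zero_less_divide_iff)
  ultimately show ?thesis unfolding r by simp
qed

lemma block_mult_vec:
  fixes B11 B12 :: "'a :: comm_ring_1 mat"
  assumes B11: "B11 \<in> carrier_mat n n" and B12: "B12 \<in> carrier_mat n n"
    and x: "x \<in> carrier_vec n" and y: "y \<in> carrier_vec n"
  shows "four_block_mat B11 B12 (1\<^sub>m n) (0\<^sub>m n n) *\<^sub>v (x @\<^sub>v y) = (B11 *\<^sub>v x + B12 *\<^sub>v y) @\<^sub>v x"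
proof -
  have "four_block_mat B11 B12 (1\<^sub>m n) (0\<^sub>m n n) *\<^sub>v (x @\<^sub>v y)
     = (B11 *\<^sub>v x + B12 *\<^sub>v y) @\<^sub>v (1\<^sub>m n *\<^sub>v x + 0\<^sub>m n n *\<^sub>v y)"
    by (rule four_block_mat_mult_vec[OF B11 B12 _ _ x y], auto)
  also have "1\<^sub>m n *\<^sub>v x + 0\<^sub>m n n *\<^sub>v y = x" using x y by (intro eq_vecI, auto)
  finally show ?thesis .
qed

lemma map_block:
  assumes B11: "B11 \<in> carrier_mat n n" and B12: "B12 \<in> carrier_mat n n"
  shows "map_mat complex_of_real (four_block_mat B11 B12 (1\<^sub>m n) (0\<^sub>m n n))
    = four_block_mat (map_mat complex_of_real B11) (map_mat complex_of_real B12) (1\<^sub>m n) (0\<^sub>m n n)"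
proof -
  have "map_mat complex_of_real (four_block_mat B11 B12 (1\<^sub>m n) (0\<^sub>m n n))
    = four_block_mat (map_mat complex_of_real B11) (map_mat complex_of_real B12)
        (map_mat complex_of_real (1\<^sub>m n)) (map_mat complex_of_real (0\<^sub>m n n))"
    by (rule map_four_block_mat[OF B11 B12], auto)
  also have "map_mat complex_of_real (1\<^sub>m n) = 1\<^sub>m n" by (intro eq_matI, auto)
  also have "map_mat complex_of_real (0\<^sub>m n n) = 0\<^sub>m n n" by (intro eq_matI, auto)
  finally show ?thesis .
qed

lemma block_eigen:
  fixes B11 B12 :: "real mat"
  assumes B11: "B11 \<in> carrier_mat n n" and B12: "B12 \<in> carrier_mat n n"
    and w: "w \<in> carrier_vec (n+n)"
    and ev: "map_mat complex_of_real (four_block_mat B11 B12 (1\<^sub>m n) (0\<^sub>m n n)) *\<^sub>v w = lam \<cdot>\<^sub>v w"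
  shows "map_mat complex_of_real B11 *\<^sub>v vec_first w n + map_mat complex_of_real B12 *\<^sub>v vec_last w n
           = lam \<cdot>\<^sub>v vec_first w n"
    and "vec_first w n = lam \<cdot>\<^sub>v vec_last w n"
proof -
  define x where "x = vec_first w n"
  define y where "y = vec_last w n"
  have x: "x \<in> carrier_vec n" and y: "y \<in> carrier_vec n" unfolding x_def y_def by auto
  have wxy: "w = x @\<^sub>v y" unfolding x_def y_def using w by simp
  have B11c: "map_mat complex_of_real B11 \<in> carrier_mat n n" and B12c: "map_mat complex_of_real B12 \<in> carrier_mat n n"
    using B11 B12 by auto
  have "map_mat complex_of_real (four_block_mat B11 B12 (1\<^sub>m n) (0\<^sub>m n n)) *\<^sub>v w
     = (map_mat complex_of_real B11 *\<^sub>v x + map_mat complex_of_real B12 *\<^sub>v y) @\<^sub>v x"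
    unfolding map_block[OF B11 B12] wxy by (rule block_mult_vec[OF B11c B12c x y])
  moreover have "lam \<cdot>\<^sub>v w = (lam \<cdot>\<^sub>v x) @\<^sub>v (lam \<cdot>\<^sub>v y)" unfolding wxy using x y
    by (intro eq_vecI, auto)
  ultimately have "(map_mat complex_of_real B11 *\<^sub>v x + map_mat complex_of_real B12 *\<^sub>v y) @\<^sub>v x
     = (lam \<cdot>\<^sub>v x) @\<^sub>v (lam \<cdot>\<^sub>v y)" using ev by simp
  hence "map_mat complex_of_real B11 *\<^sub>v x + map_mat complex_of_real B12 *\<^sub>v y = lam \<cdot>\<^sub>v x \<and> x = lam \<cdot>\<^sub>v y"
    by (subst (asm) append_vec_eq, insert B11c B12c x y, auto)
  thus "map_mat complex_of_real B11 *\<^sub>v vec_first w n + map_mat complex_of_real B12 *\<^sub>v vec_last w n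
           = lam \<cdot>\<^sub>v vec_first w n" and "vec_first w n = lam \<cdot>\<^sub>v vec_last w n"
    unfolding x_def y_def by auto
qed

lemma rho_block_lt1:
  fixes X1 Y1 :: "real mat"
  assumes X1: "X1 \<in> carrier_mat n n" "nonneg X1" and Y1: "Y1 \<in> carrier_mat n n" "nonneg Y1"
    and n: "n > 0"
    and nosub: "\<And>u. u \<in> carrier_vec n \<Longrightarrow> (\<And>i. i < n \<Longrightarrow> 0 \<le> u $ i)
        \<Longrightarrow> (\<And>i. i < n \<Longrightarrow> u $ i \<le> ((X1 + Y1) *\<^sub>v u) $ i) \<Longrightarrow> u = 0\<^sub>v n"
  shows "rho (four_block_mat X1 Y1 (1\<^sub>m n) (0\<^sub>m n n)) < 1"
proof (rule ccontr)
  assume "\<not> ?thesis"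
  hence ge: "rho (four_block_mat X1 Y1 (1\<^sub>m n) (0\<^sub>m n n)) \<ge> 1" by simp
  have T: "four_block_mat X1 Y1 (1\<^sub>m n) (0\<^sub>m n n) \<in> carrier_mat (n+n) (n+n)" using X1 Y1 by auto
  obtain lam w where w: "w \<in> carrier_vec (n+n)" and w0: "w \<noteq> 0\<^sub>v (n+n)"
    and ev: "map_mat complex_of_real (four_block_mat X1 Y1 (1\<^sub>m n) (0\<^sub>m n n)) *\<^sub>v w = lam \<cdot>\<^sub>v w"
    and r: "rho (four_block_mat X1 Y1 (1\<^sub>m n) (0\<^sub>m n n)) = norm lam"
    using rho_eigen[OF T] n by auto
  have l1: "norm lam \<ge> 1" using ge r by simp
  define x where "x = vec_first w n"
  define y where "y = vec_last w n"
  have x: "x \<in> carrier_vec n" and y: "y \<in> carrier_vec n" unfolding x_def y_def by auto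
  note be = block_eigen[OF X1(1) Y1(1) w ev, folded x_def y_def]
  define u where "u = vec n (\<lambda>i. norm (x $ i))"
  define uy where "uy = vec n (\<lambda>i. norm (y $ i))"
  have u: "u \<in> carrier_vec n" and uy: "uy \<in> carrier_vec n" unfolding u_def uy_def by auto
  have yle: "uy $ i \<le> u $ i" if i: "i < n" for i
  proof -
    have "x $ i = lam * y $ i" using arg_cong[OF be(2), of "\<lambda>v. v $ i"] i y by simp
    hence "norm (x $ i) = norm lam * norm (y $ i)" by (simp add: norm_mult)
    moreover have "norm (y $ i) \<le> norm lam * norm (y $ i)" using l1 by (simp add: mult_le_cancel_right1)
    ultimately show ?thesis unfolding u_def uy_def using i by simp
  qed
  have usub: "u $ i \<le> ((X1 + Y1) *\<^sub>v u) $ i" if i: "i < n" for i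
  proof -
    have "(map_mat complex_of_real X1 *\<^sub>v x + map_mat complex_of_real Y1 *\<^sub>v y) $ i = lam * x $ i"
      using arg_cong[OF be(1), of "\<lambda>v. v $ i"] i x by simp
    hence "norm lam * norm (x $ i) = norm ((map_mat complex_of_real X1 *\<^sub>v x) $ i + (map_mat complex_of_real Y1 *\<^sub>v y) $ i)"
      using i X1 Y1 by (simp add: norm_mult)
    also have "\<dots> \<le> norm ((map_mat complex_of_real X1 *\<^sub>v x) $ i) + norm ((map_mat complex_of_real Y1 *\<^sub>v y) $ i)"
      by (rule norm_triangle_ineq)
    also have "\<dots> \<le> (X1 *\<^sub>v u) $ i + (Y1 *\<^sub>v uy) $ i"
      using norm_mv_le[OF X1(1) X1(2) x i] norm_mv_le[OF Y1(1) Y1(2) y i] unfolding u_def uy_def by simp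
    also have "(Y1 *\<^sub>v uy) $ i \<le> (Y1 *\<^sub>v u) $ i" by (rule mv_mono[OF Y1(2) Y1(1) uy u yle i])
    also have "(X1 *\<^sub>v u) $ i + (Y1 *\<^sub>v u) $ i = ((X1 + Y1) *\<^sub>v u) $ i"
      using add_mult_distrib_mat_vec[OF X1(1) Y1(1) u] i X1 Y1 u by simp
    finally have "norm lam * u $ i \<le> ((X1 + Y1) *\<^sub>v u) $ i" unfolding u_def using i by simp
    moreover have "u $ i \<le> norm lam * u $ i" using l1 i unfolding u_def by (simp add: mult_le_cancel_right1)
    ultimately show ?thesis by simp
  qed
  have "u = 0\<^sub>v n" by (rule nosub[OF u], insert usub, auto simp: u_def)
  hence x0: "x = 0\<^sub>v n" using x unfolding u_def by (intro eq_vecI, auto simp: vec_eq_iff)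
  have lam0: "lam \<noteq> 0" using l1 by auto
  have y0: "y = 0\<^sub>v n"
  proof (rule eq_vecI)
    fix i assume "i < dim_vec (0\<^sub>v n :: complex vec)"
    hence i: "i < n" by simp
    have "x $ i = lam * y $ i" using arg_cong[OF be(2), of "\<lambda>v. v $ i"] i y by simp
    thus "y $ i = 0\<^sub>v n $ i" using x0 i lam0 by simp
  qed (insert y, auto)
  have "w = x @\<^sub>v y" unfolding x_def y_def using w by simp
  also have "\<dots> = 0\<^sub>v (n+n)" unfolding x0 y0 by (intro eq_vecI, auto)
  finally show False using w0 by simp
qed

lemma smult_pow_mat:
  fixes A :: "'a :: comm_ring_1 mat"
  assumes A: "A \<in> carrier_mat n n"
  shows "(a \<cdot>\<^sub>m A) ^\<^sub>m k = (a ^ k) \<cdot>\<^sub>m (A ^\<^sub>m k)"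
proof (induct k)
  case 0 show ?case using A by (intro eq_matI, auto)
next
  case (Suc k)
  have Ak: "A ^\<^sub>m k \<in> carrier_mat n n" using A by auto
  have aA: "a \<cdot>\<^sub>m A \<in> carrier_mat n n" using A by auto
  have "(a \<cdot>\<^sub>m A) ^\<^sub>m Suc k = (a ^ k \<cdot>\<^sub>m A ^\<^sub>m k) * (a \<cdot>\<^sub>m A)" using Suc by simp
  also have "\<dots> = a ^ k \<cdot>\<^sub>m (A ^\<^sub>m k * (a \<cdot>\<^sub>m A))" using mult_smult_assoc_mat[OF Ak aA] .
  also have "A ^\<^sub>m k * (a \<cdot>\<^sub>m A) = a \<cdot>\<^sub>m (A ^\<^sub>m k * A)" using mult_smult_distrib[OF Ak A] .
  also have "a ^ k \<cdot>\<^sub>m (a \<cdot>\<^sub>m (A ^\<^sub>m k * A)) = (a ^ Suc k) \<cdot>\<^sub>m (A ^\<^sub>m Suc k)"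
    using Ak A by (intro eq_matI, auto simp: ac_simps)
  finally show ?case .
qed

lemma pow_commute:
  fixes A :: "'a :: comm_ring_1 mat"
  assumes A: "A \<in> carrier_mat n n"
  shows "A * A ^\<^sub>m k = A ^\<^sub>m Suc k"
proof (induct k)
  case 0 show ?case using A by (simp add: right_mult_one_mat left_mult_one_mat)
next
  case (Suc k)
  have Ak: "A ^\<^sub>m k \<in> carrier_mat n n" using A by auto
  have "A * A ^\<^sub>m Suc k = A * (A ^\<^sub>m k * A)" by simp
  also have "\<dots> = (A * A ^\<^sub>m k) * A" using assoc_mult_mat[OF A Ak A] by simp
  also have "\<dots> = A ^\<^sub>m Suc (Suc k)" using Suc by simp
  finally show ?case .
qed

lemma entry_bound:
  fixes M :: "real mat"
  assumes M: "M \<in> carrier_mat n n" and n: "n > 0" and c: "rho M < c"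
  shows "\<exists>C. \<forall>k i j. i < n \<longrightarrow> j < n \<longrightarrow> (M ^\<^sub>m k) $$ (i,j) \<le> C * c ^ k"
proof -
  have r0: "rho M \<ge> 0" using rho_nonneg[OF M n] .
  hence c0: "c > 0" using c by simp
  define Mc where "Mc = map_mat complex_of_real M"
  have Mc: "Mc \<in> carrier_mat n n" unfolding Mc_def using M by auto
  define B where "B = complex_of_real (1 / c) \<cdot>\<^sub>m Mc"
  have Bc: "B \<in> carrier_mat n n" unfolding B_def using Mc by auto
  have srB: "spectral_radius B < 1"
  proof -
    obtain mu where mu: "mu \<in> spectrum B" and eq: "spectral_radius B = norm mu"
      using spectral_radius_mem_max(1)[OF Bc n] by auto
    obtain w where ev: "eigenvector B w mu" using mu unfolding spectrum_def eigenvalue_def by auto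
    have w: "w \<in> carrier_vec n" and w0: "w \<noteq> 0\<^sub>v n" and Bw: "B *\<^sub>v w = mu \<cdot>\<^sub>v w"
      using ev Bc unfolding eigenvector_def by auto
    have "Mc *\<^sub>v w = (complex_of_real c * mu) \<cdot>\<^sub>v w"
    proof (rule eq_vecI)
      fix i assume i: "i < dim_vec ((complex_of_real c * mu) \<cdot>\<^sub>v w)"
      hence i: "i < n" using w by auto
      have "(B *\<^sub>v w) $ i = complex_of_real (1 / c) * (Mc *\<^sub>v w) $ i"
        unfolding B_def using Mc w i by (auto simp: scalar_prod_def sum_distrib_left ac_simps)
      hence "complex_of_real (1 / c) * (Mc *\<^sub>v w) $ i = mu * w $ i" using Bw i w by simp
      moreover have cc: "complex_of_real c * complex_of_real (1 / c) = 1"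
        using c0 by (simp flip: of_real_mult)
      ultimately have "complex_of_real c * (complex_of_real (1 / c) * (Mc *\<^sub>v w) $ i) = complex_of_real c * (mu * w $ i)"
        by simp
      hence "(Mc *\<^sub>v w) $ i = complex_of_real c * (mu * w $ i)" unfolding mult.assoc[symmetric] cc by simp
      thus "(Mc *\<^sub>v w) $ i = ((complex_of_real c * mu) \<cdot>\<^sub>v w) $ i" using i w by (simp add: ac_simps)
    qed (insert Mc w, auto)
    hence "eigenvector Mc w (complex_of_real c * mu)" using w w0 Mc unfolding eigenvector_def by auto
    hence "complex_of_real c * mu \<in> spectrum Mc" unfolding spectrum_def eigenvalue_def by auto
    hence "norm (complex_of_real c * mu) \<le> rho M"
      using spectral_radius_mem_max(2)[OF Mc n] unfolding rho_def Mc_def by auto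
    hence h: "c * norm mu \<le> rho M" using c0 by (simp add: norm_mult)
    have "c * norm mu < c * 1" using h c by linarith
    hence "norm mu < 1" using c0 by (simp only: mult_less_cancel_left_pos)
    thus ?thesis unfolding eq .
  qed
  obtain C where C: "\<And>k. norm_bound (B ^\<^sub>m k) C"
    using spectral_radius_jnf_norm_bound_less_1_upper_triangular[OF Bc srB] by auto
  have "(M ^\<^sub>m k) $$ (i,j) \<le> C * c ^ k" if ij: "i < n" "j < n" for k i j
  proof -
    have "B ^\<^sub>m k = (complex_of_real (1 / c)) ^ k \<cdot>\<^sub>m Mc ^\<^sub>m k" unfolding B_def using smult_pow_mat[OF Mc] .
    also have "Mc ^\<^sub>m k = map_mat complex_of_real (M ^\<^sub>m k)" unfolding Mc_def
      by (rule of_real_hom.mat_hom_pow[OF M, symmetric])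
    finally have eqB: "(B ^\<^sub>m k) $$ (i,j) = complex_of_real ((1 / c) ^ k * (M ^\<^sub>m k) $$ (i,j))"
      using ij M by simp
    have "norm ((B ^\<^sub>m k) $$ (i,j)) \<le> C" using C[of k] ij Bc unfolding norm_bound_def by auto
    hence "norm (complex_of_real ((1 / c) ^ k * (M ^\<^sub>m k) $$ (i,j))) \<le> C" unfolding eqB .
    hence "\<bar>(1 / c) ^ k * (M ^\<^sub>m k) $$ (i,j)\<bar> \<le> C" by (simp only: norm_of_real)
    hence "(1 / c) ^ k * (M ^\<^sub>m k) $$ (i,j) \<le> C" by simp
    hence le: "((1 / c) ^ k * (M ^\<^sub>m k) $$ (i,j)) * c ^ k \<le> C * c ^ k"
      using c0 by (intro mult_right_mono, auto)
    have "(1 / c) ^ k * c ^ k = 1" using c0 by (simp add: power_mult_distrib[symmetric])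
    hence eq: "((1 / c) ^ k * (M ^\<^sub>m k) $$ (i,j)) * c ^ k = (M ^\<^sub>m k) $$ (i,j)"
      by (metis mult.assoc mult.commute mult_1)
    show ?thesis using le unfolding eq .
  qed
  thus ?thesis by blast
qed

lemma pos_subinv:
  fixes M :: "real mat"
  assumes M: "M \<in> carrier_mat n n" "nonneg M" and n: "n > 0" and s: "rho M < s"
  shows "\<exists>v \<in> carrier_vec n. (\<forall>i<n. 0 < v $ i) \<and> (\<forall>i<n. (M *\<^sub>v v) $ i \<le> s * v $ i)"
proof -
  have r0: "rho M \<ge> 0" using rho_nonneg[OF M(1) n] .
  define c where "c = (rho M + s) / 2"
  have c: "rho M < c" "c < s" "0 < c" "0 < s" using s r0 unfolding c_def by auto
  obtain C where C: "\<And>k i j. i < n \<Longrightarrow> j < n \<Longrightarrow> (M ^\<^sub>m k) $$ (i,j) \<le> C * c ^ k"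
    using entry_bound[OF M(1) n c(1)] by blast
  define C' where "C' = max C 0"
  have C'0: "C' \<ge> 0" unfolding C'_def by simp
  have C': "(M ^\<^sub>m k) $$ (i,j) \<le> C' * c ^ k" if "i < n" "j < n" for k i j
  proof -
    have "C * c ^ k \<le> C' * c ^ k" unfolding C'_def using c by (intro mult_right_mono, auto)
    thus ?thesis using C[OF that, of k] by simp
  qed
  have y: "1 / (real n * C' + 1) > 0" using C'0 by (simp add: add_nonneg_pos)
  have cs1: "c / s < 1" using c by simp
  obtain K0 where K0: "(c / s) ^ K0 < 1 / (real n * C' + 1)" using real_arch_pow_inv[OF y cs1] by blast
  define K where "K = Suc K0"
  have cs0: "c / s \<ge> 0" using c by simp
  have "(c / s) ^ K \<le> (c / s) ^ K0" unfolding K_def using cs0 cs1 by (intro power_decreasing, auto)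
  with K0 have K': "(c / s) ^ K < 1 / (real n * C' + 1)" by simp
  define e :: "real vec" where "e = vec n (\<lambda>_. 1)"
  have e: "e \<in> carrier_vec n" unfolding e_def by simp
  define wv where "wv k = M ^\<^sub>m k *\<^sub>v e" for k
  have wvc: "wv k \<in> carrier_vec n" for k unfolding wv_def using pow_carrier_mat[OF M(1)] e by (metis mult_mat_vec_carrier)
  have wv0: "wv 0 $ i = 1" if "i < n" for i unfolding wv_def e_def using M that by simp
  have wvnn: "wv k $ i \<ge> 0" if "i < n" for k i unfolding wv_def
    by (rule mv_nonneg[OF nonneg_pow[OF M(2) M(1)] pow_carrier_mat[OF M(1)] e _ that], auto simp: e_def)
  have wvS: "M *\<^sub>v wv k = wv (Suc k)" for k
  proof -
    have Mk: "M ^\<^sub>m k \<in> carrier_mat n n" using M by auto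
    have "M *\<^sub>v wv k = (M * M ^\<^sub>m k) *\<^sub>v e" unfolding wv_def using assoc_mult_mat_vec[OF M(1) Mk e] by simp
    also have "\<dots> = wv (Suc k)" unfolding wv_def pow_commute[OF M(1)] ..
    finally show ?thesis .
  qed
  have wvK: "wv K $ i \<le> s ^ K" if i: "i < n" for i
  proof -
    have "wv K $ i = (\<Sum>j<n. (M ^\<^sub>m K) $$ (i,j))"
      unfolding wv_def e_def using M i by (auto simp: scalar_prod_def lessThan_atLeast0 intro!: sum.cong)
    also have "\<dots> \<le> (\<Sum>j<n. C' * c ^ K)" by (rule sum_mono, rule C'[OF i], auto)
    also have "\<dots> = real n * C' * c ^ K" by simp
    also have "\<dots> = (real n * C') * (c / s) ^ K * s ^ K" using c by (simp add: power_divide)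
    also have "\<dots> \<le> 1 * s ^ K"
    proof (rule mult_right_mono)
      have "(real n * C') * (c / s) ^ K \<le> (real n * C') * (1 / (real n * C' + 1))"
        using K' C'0 by (intro mult_left_mono, auto)
      also have "\<dots> \<le> 1" using C'0 by (simp add: divide_le_eq_1 add_nonneg_pos)
      finally show "(real n * C') * (c / s) ^ K \<le> 1" .
    qed (insert c, auto)
    finally show ?thesis by simp
  qed
  define v where "v = vec n (\<lambda>i. \<Sum>k<K. wv k $ i / s ^ k)"
  have vc: "v \<in> carrier_vec n" unfolding v_def by simp
  have vpos: "0 < v $ i" if i: "i < n" for i
  proof -
    have "v $ i = (\<Sum>k<Suc K0. wv k $ i / s ^ k)" unfolding v_def K_def using i by simp
    also have "\<dots> = wv 0 $ i / s ^ 0 + (\<Sum>k<K0. wv (Suc k) $ i / s ^ Suc k)"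
      by (rule sum.lessThan_Suc_shift)
    finally have "v $ i = wv 0 $ i / s ^ 0 + (\<Sum>k<K0. wv (Suc k) $ i / s ^ Suc k)" .
    moreover have "(\<Sum>k<K0. wv (Suc k) $ i / s ^ Suc k) \<ge> 0"
      using wvnn[OF i] c by (intro sum_nonneg, auto)
    ultimately show ?thesis using wv0[OF i] by simp
  qed
  have vsub: "(M *\<^sub>v v) $ i \<le> s * v $ i" if i: "i < n" for i
  proof -
    define f where "f k = wv k $ i / s ^ k" for k
    have "(M *\<^sub>v v) $ i = (\<Sum>l<n. M $$ (i,l) * (\<Sum>k<K. wv k $ l / s ^ k))"
      unfolding v_def using M i by (auto simp: scalar_prod_def lessThan_atLeast0 intro!: sum.cong)
    also have "\<dots> = (\<Sum>k<K. (\<Sum>l<n. M $$ (i,l) * wv k $ l) / s ^ k)"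
      by (simp add: sum_distrib_left sum_divide_distrib sum.swap[of _ "{..<K}"] ac_simps)
    also have "\<dots> = (\<Sum>k<K. wv (Suc k) $ i / s ^ k)"
    proof (rule sum.cong[OF refl])
      fix k
      have "(M *\<^sub>v wv k) $ i = (\<Sum>l<n. M $$ (i,l) * wv k $ l)"
        using M i wvc[of k] by (auto simp: scalar_prod_def lessThan_atLeast0 intro!: sum.cong)
      thus "(\<Sum>l<n. M $$ (i,l) * wv k $ l) / s ^ k = wv (Suc k) $ i / s ^ k" using wvS[of k] by simp
    qed
    also have "\<dots> = s * (\<Sum>k<K. f (Suc k))"
      unfolding f_def sum_distrib_left using c by (intro sum.cong, auto)
    also have "(\<Sum>k<K. f (Suc k)) = (\<Sum>k<K. f k) + f K - f 0"
      using sum.lessThan_Suc[of f K] sum.lessThan_Suc_shift[of f K] by simp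
    also have "f K \<le> f 0" unfolding f_def using wvK[OF i] wv0[OF i] c by (simp add: divide_le_eq_1)
    hence "(\<Sum>k<K. f k) + f K - f 0 \<le> (\<Sum>k<K. f k)" by simp
    hence "s * ((\<Sum>k<K. f k) + f K - f 0) \<le> s * (\<Sum>k<K. f k)" using c by (intro mult_left_mono, auto)
    also have "(\<Sum>k<K. f k) = v $ i" unfolding v_def f_def using i by simp
    finally show ?thesis .
  qed
  show ?thesis using vc vpos vsub by blast
qed

lemma ge0_nonneg: "M \<ge> 0\<^sub>m r c \<Longrightarrow> nonneg M \<and> M \<in> carrier_mat r c"
  unfolding less_eq_mat_def nonneg_def by auto

lemma le0_nonneg: "(M :: real mat) \<le> 0\<^sub>m r c \<Longrightarrow> nonneg (- M) \<and> M \<in> carrier_mat r c"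
  unfolding less_eq_mat_def nonneg_def by auto

lemma mv_le_mat:
  fixes M N :: "real mat"
  assumes M: "M \<in> carrier_mat nr nc" and N: "N \<in> carrier_mat nr nc"
    and le: "\<And>i j. i < nr \<Longrightarrow> j < nc \<Longrightarrow> M $$ (i,j) \<le> N $$ (i,j)"
    and u: "u \<in> carrier_vec nc" and u0: "\<And>j. j < nc \<Longrightarrow> 0 \<le> u $ j" and i: "i < nr"
  shows "(M *\<^sub>v u) $ i \<le> (N *\<^sub>v u) $ i"
  using assms by (auto simp: scalar_prod_def intro!: sum_mono mult_right_mono)

lemma ge_entry: "(A :: real mat) \<ge> B \<Longrightarrow> i < dim_row A \<Longrightarrow> j < dim_col A \<Longrightarrow> B $$ (i,j) \<le> A $$ (i,j)"
  unfolding less_eq_mat_def by simp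

lemma nonneg_block:
  assumes "nonneg X" "nonneg Y" "X \<in> carrier_mat n n" "Y \<in> carrier_mat n n"
  shows "nonneg (four_block_mat X Y (1\<^sub>m n) (0\<^sub>m n n))"
  using assms unfolding nonneg_def by auto

theorem theorem3p16:
  fixes m n :: nat and A P1 R1 S1 P2 R2 S2 :: "real mat"
  assumes n_pos: "n > 0"
    and A: "A \<in> carrier_mat m n"
    and semi: "semi_monotone A"
    and split1: "double_proper_weak_regular_splitting m n A P1 R1 S1"
    and split2: "double_proper_regular_splitting m n A P2 R2 S2"
    and null: "mat_null P2 \<subseteq> mat_null R2"
    and range: "mat_range R2 \<subseteq> mat_range P2"
    and spec: "- 1 \<notin> rspectrum (R2 * pinv P1)"
    and hatA: "pinv ((1\<^sub>m m + R2 * pinv P1) * A) \<ge> 0\<^sub>m n m"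
    and c1: "pinv P1 * R1 \<ge> pinv P2 * R2"
    and c2: "pinv P2 * S2 \<ge> pinv P1 * S1"
    and c3: "pinv P2 * R2 + pinv P2 * S2 \<le> 0\<^sub>m n n"
  shows "rho (four_block_mat (pinv P2 * R2 * pinv P1 * R1 - pinv P2 * S2)
                             (- (pinv P2 * R2 * pinv P1 * S1))
                             (1\<^sub>m n) (0\<^sub>m n n))
           \<le> rho (four_block_mat (pinv P1 * R1) (- (pinv P1 * S1)) (1\<^sub>m n) (0\<^sub>m n n))
       \<and> rho (four_block_mat (pinv P1 * R1) (- (pinv P1 * S1)) (1\<^sub>m n) (0\<^sub>m n n)) < 1"
proof -
  note s1 = split1[unfolded double_proper_weak_regular_splitting_def double_proper_splitting_def double_splitting_def]
  note s2 = split2[unfolded double_proper_regular_splitting_def double_proper_splitting_def double_splitting_def]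
  have P1: "P1 \<in> carrier_mat m n" and R1: "R1 \<in> carrier_mat m n" and S1: "S1 \<in> carrier_mat m n"
    and AP1: "A = P1 - R1 + S1" and rng1: "mat_range P1 = mat_range A" and nul1: "mat_null P1 = mat_null A"
    using s1 by auto
  have P2: "P2 \<in> carrier_mat m n" and R2: "R2 \<in> carrier_mat m n" and S2: "S2 \<in> carrier_mat m n"
    using s2 by auto
  have h1: "pinv P1 \<ge> 0\<^sub>m n m" "pinv P1 * R1 \<ge> 0\<^sub>m n n" "pinv P1 * S1 \<le> 0\<^sub>m n n"
    using split1 unfolding double_proper_weak_regular_splitting_def by auto
  have h2: "pinv P2 \<ge> 0\<^sub>m n m" "R2 \<ge> 0\<^sub>m m n" "S2 \<le> 0\<^sub>m m n"
    using split2 unfolding double_proper_regular_splitting_def by auto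
  define G1 where "G1 = pinv P1"
  define G2 where "G2 = pinv P2"
  have G1: "G1 \<in> carrier_mat n m" "nonneg G1" using ge0_nonneg[OF h1(1)] unfolding G1_def by auto
  have G2: "G2 \<in> carrier_mat n m" "nonneg G2" using ge0_nonneg[OF h2(1)] unfolding G2_def by auto
  have R2n: "nonneg R2" using ge0_nonneg[OF h2(2)] by auto
  have S2n: "nonneg (- S2)" using le0_nonneg[OF h2(3)] by auto
  have Adn: "nonneg (pinv A)" and Ad: "pinv A \<in> carrier_mat n m"
  proof -
    have "0\<^sub>m n m \<le> pinv A" using semi A unfolding semi_monotone_def by auto
    from ge0_nonneg[OF this] show "nonneg (pinv A)" "pinv A \<in> carrier_mat n m" by auto
  qed
  define X1 where "X1 = G1 * R1"
  define Y1 where "Y1 = - (G1 * S1)"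
  define X2 where "X2 = G2 * R2"
  define Y2 where "Y2 = - (G2 * S2)"
  have X1: "X1 \<in> carrier_mat n n" "nonneg X1" using ge0_nonneg[OF h1(2)] unfolding X1_def G1_def by auto
  have Y1: "Y1 \<in> carrier_mat n n" "nonneg Y1" using le0_nonneg[OF h1(3)] unfolding Y1_def G1_def by auto
  have X2c: "X2 \<in> carrier_mat n n" unfolding X2_def using G2 R2 by auto
  have Y2c: "Y2 \<in> carrier_mat n n" unfolding Y2_def using G2 S2 by auto
  have X2n: "nonneg X2" unfolding X2_def by (rule nonneg_mult[OF G2(2) R2n G2(1) R2])
  have Y2n: "nonneg Y2"
  proof -
    have "nonneg (G2 * (- S2))" using nonneg_mult[OF G2(2) S2n G2(1)] S2 by auto
    moreover have "G2 * (- S2) = - (G2 * S2)" using uminus_mult_right_mat[of G2 S2] G2 S2 by auto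
    ultimately show ?thesis unfolding Y2_def by simp
  qed
  have X21: "X2 $$ (i,j) \<le> X1 $$ (i,j)" if ij: "i < n" "j < n" for i j
  proof -
    have d: "i < dim_row (pinv P1 * R1)" "j < dim_col (pinv P1 * R1)"
      using ij X1(1) unfolding X1_def G1_def by (auto dest: carrier_matD)
    show ?thesis using ge_entry[OF c1 d] unfolding X1_def X2_def G1_def G2_def .
  qed
  have Y21: "Y2 $$ (i,j) \<le> Y1 $$ (i,j)" if ij: "i < n" "j < n" for i j
  proof -
    have "(G1 * S1) $$ (i,j) \<le> (G2 * S2) $$ (i,j)"
    proof -
      have d: "i < dim_row (pinv P2 * S2)" "j < dim_col (pinv P2 * S2)"
        using ij G2 S2 unfolding G2_def by (auto dest: carrier_matD)
      show ?thesis using ge_entry[OF c2 d] unfolding G1_def G2_def .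
    qed
    moreover have "Y1 $$ (i,j) = - (G1 * S1) $$ (i,j)" unfolding Y1_def using ij G1 S1 by simp
    moreover have "Y2 $$ (i,j) = - (G2 * S2) $$ (i,j)" unfolding Y2_def using ij G2 S2 by simp
    ultimately show ?thesis by simp
  qed
  have XY: "X1 + Y1 = G1 * (P1 - A)"
  proof -
    have "P1 - A = R1 - S1" using AP1 P1 R1 S1 by (intro eq_matI, auto)
    hence "G1 * (P1 - A) = G1 * R1 - G1 * S1" using mult_minus_distrib_mat[OF G1(1) R1 S1] by simp
    thus ?thesis unfolding X1_def Y1_def using G1 R1 S1 by (intro eq_matI, auto)
  qed
  have id: "pinv A - G1 * (P1 - A) * pinv A = G1"
    unfolding G1_def by (rule proper_identity[OF A P1 rng1 nul1])
  have PA: "P1 - A \<in> carrier_mat n m \<or> P1 - A \<in> carrier_mat m n" using P1 A by auto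
  have T1lt: "rho (four_block_mat X1 Y1 (1\<^sub>m n) (0\<^sub>m n n)) < 1"
  proof (rule rho_block_lt1[OF X1 Y1 n_pos])
    fix u :: "real vec" assume u: "u \<in> carrier_vec n" and u0: "\<And>i. i < n \<Longrightarrow> 0 \<le> u $ i"
      and uX: "\<And>i. i < n \<Longrightarrow> u $ i \<le> ((X1 + Y1) *\<^sub>v u) $ i"
    have Xn: "nonneg (G1 * (P1 - A))" unfolding XY[symmetric] using X1 Y1 unfolding nonneg_def by auto
    show "u = 0\<^sub>v n"
      by (rule no_sub[OF G1(1) Ad _ G1(2) Adn refl Xn _ u u0], insert P1 A id uX XY, auto)
  qed
  define T where "T = four_block_mat X1 Y1 (1\<^sub>m n) (0\<^sub>m n n)"
  define W11 where "W11 = G2 * R2 * G1 * R1 - G2 * S2"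
  define W12 where "W12 = - (G2 * R2 * G1 * S1)"
  define W where "W = four_block_mat W11 W12 (1\<^sub>m n) (0\<^sub>m n n)"
  have W11: "W11 = X2 * X1 + Y2"
  proof -
    have "G2 * R2 * G1 * R1 = X2 * X1" unfolding X2_def X1_def
      using assoc_mult_mat[OF mult_carrier_mat[OF G2(1) R2] G1(1) R1] .
    thus ?thesis unfolding W11_def Y2_def using X2c X1 G2 S2 by (intro eq_matI, auto)
  qed
  have W12: "W12 = X2 * Y1"
  proof -
    have "G2 * R2 * G1 * S1 = X2 * (G1 * S1)" unfolding X2_def
      using assoc_mult_mat[OF mult_carrier_mat[OF G2(1) R2] G1(1) S1] .
    moreover have "X2 * - (G1 * S1) = - (X2 * (G1 * S1))"
      using uminus_mult_right_mat[of X2 "G1 * S1"] X2c G1 S1 by auto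
    ultimately show ?thesis unfolding W12_def Y1_def by simp
  qed
  have W11c: "W11 \<in> carrier_mat n n" unfolding W11 using X2c X1 Y2c by auto
  have W12c: "W12 \<in> carrier_mat n n" unfolding W12 using X2c Y1 by auto
  have Tc: "T \<in> carrier_mat (n+n) (n+n)" unfolding T_def using X1 Y1 by auto
  have Wc: "W \<in> carrier_mat (n+n) (n+n)" unfolding W_def using W11c W12c by auto
  have Tn: "nonneg T" unfolding T_def by (rule nonneg_block[OF X1(2) Y1(2) X1(1) Y1(1)])
  have Wn: "nonneg W" unfolding W_def
  proof (rule nonneg_block[OF _ _ W11c W12c])
    show "nonneg W11" unfolding W11 using nonneg_mult[OF X2n X1(2) X2c X1(1)] Y2n X2c X1 Y2c
      unfolding nonneg_def by (auto intro: add_nonneg_nonneg)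
    show "nonneg W12" unfolding W12 by (rule nonneg_mult[OF X2n Y1(2) X2c Y1(1)])
  qed
  have nn: "n + n > 0" using n_pos by simp
  have Wle: "rho W \<le> s" if s: "rho T < s" "s \<le> 1" for s
  proof -
    have s0: "s > 0" using rho_nonneg[OF Tc nn] s by simp
    obtain v where v: "v \<in> carrier_vec (n+n)" and vpos: "\<And>i. i < n+n \<Longrightarrow> 0 < v $ i"
      and Tv: "\<And>i. i < n+n \<Longrightarrow> (T *\<^sub>v v) $ i \<le> s * v $ i"
      using pos_subinv[OF Tc Tn nn s(1)] by blast
    define x where "x = vec_first v n"
    define y where "y = vec_last v n"
    have x: "x \<in> carrier_vec n" and y: "y \<in> carrier_vec n" unfolding x_def y_def by auto
    have vxy: "v = x @\<^sub>v y" unfolding x_def y_def using v by simp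
    have xi: "x $ i = v $ i" if "i < n" for i unfolding x_def vec_first_def using that by simp
    have yi: "y $ i = v $ (n + i)" if "i < n" for i unfolding y_def vec_last_def using that v by simp
    have xpos: "0 \<le> x $ i" if "i < n" for i using vpos[of i] that xi by simp
    define t where "t = X1 *\<^sub>v x + Y1 *\<^sub>v y"
    have tc: "t \<in> carrier_vec n" unfolding t_def using X1 Y1 x y by auto
    have Tv': "T *\<^sub>v v = t @\<^sub>v x" unfolding T_def vxy t_def by (rule block_mult_vec[OF X1(1) Y1(1) x y])
    have Wv': "W *\<^sub>v v = (W11 *\<^sub>v x + W12 *\<^sub>v y) @\<^sub>v x" unfolding W_def vxy
      by (rule block_mult_vec[OF W11c W12c x y])
    have tle: "t $ i \<le> s * x $ i" if i: "i < n" for i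
      using Tv[of i] i unfolding Tv' using tc xi by simp
    have xle: "x $ i \<le> s * y $ i" if i: "i < n" for i
      using Tv[of "n + i"] i unfolding Tv' using tc x yi by simp
    have Wtop: "W11 *\<^sub>v x + W12 *\<^sub>v y = X2 *\<^sub>v t + Y2 *\<^sub>v x"
    proof -
      have "W11 *\<^sub>v x = X2 *\<^sub>v (X1 *\<^sub>v x) + Y2 *\<^sub>v x" unfolding W11
        using add_mult_distrib_mat_vec[OF mult_carrier_mat[OF X2c X1(1)] Y2c x] assoc_mult_mat_vec[OF X2c X1(1) x] by simp
      moreover have "W12 *\<^sub>v y = X2 *\<^sub>v (Y1 *\<^sub>v y)" unfolding W12 using assoc_mult_mat_vec[OF X2c Y1(1) y] .
      moreover have "X2 *\<^sub>v t = X2 *\<^sub>v (X1 *\<^sub>v x) + X2 *\<^sub>v (Y1 *\<^sub>v y)" unfolding t_def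
        using mult_add_distrib_mat_vec[OF X2c, of "X1 *\<^sub>v x" "Y1 *\<^sub>v y"] X1 Y1 x y by auto
      ultimately show ?thesis using X2c Y2c X1 Y1 x y by (intro eq_vecI, auto)
    qed
    have Wtopi: "(W11 *\<^sub>v x + W12 *\<^sub>v y) $ i \<le> s * x $ i" if i: "i < n" for i
    proof -
      have sx: "s \<cdot>\<^sub>v x \<in> carrier_vec n" "s \<cdot>\<^sub>v y \<in> carrier_vec n" using x y by auto
      have "(W11 *\<^sub>v x + W12 *\<^sub>v y) $ i = (X2 *\<^sub>v t) $ i + (Y2 *\<^sub>v x) $ i"
        unfolding Wtop using i X2c Y2c tc x by simp
      also have "(X2 *\<^sub>v t) $ i \<le> (X2 *\<^sub>v (s \<cdot>\<^sub>v x)) $ i"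
        by (rule mv_mono[OF X2n X2c tc sx(1) _ i], insert tle x, auto)
      also have "(X2 *\<^sub>v (s \<cdot>\<^sub>v x)) $ i = s * (X2 *\<^sub>v x) $ i" using X2c x i by simp
      also have "(X2 *\<^sub>v x) $ i \<le> (X1 *\<^sub>v x) $ i"
        by (rule mv_le_mat[OF X2c X1(1) X21 x xpos i])
      also have "(Y2 *\<^sub>v x) $ i \<le> (Y1 *\<^sub>v x) $ i"
        by (rule mv_le_mat[OF Y2c Y1(1) Y21 x xpos i])
      also have "(Y1 *\<^sub>v x) $ i \<le> (Y1 *\<^sub>v (s \<cdot>\<^sub>v y)) $ i"
        by (rule mv_mono[OF Y1(2) Y1(1) x sx(2) _ i], insert xle y, auto)
      also have "(Y1 *\<^sub>v (s \<cdot>\<^sub>v y)) $ i = s * (Y1 *\<^sub>v y) $ i" using Y1 y i by simp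
      finally have "(W11 *\<^sub>v x + W12 *\<^sub>v y) $ i \<le> s * ((X1 *\<^sub>v x) $ i + (Y1 *\<^sub>v y) $ i)"
        using s0 by (simp add: mult_left_mono algebra_simps)
      also have "(X1 *\<^sub>v x) $ i + (Y1 *\<^sub>v y) $ i = t $ i" unfolding t_def using X1 Y1 x y i by simp
      also have "s * t $ i \<le> s * (s * x $ i)" using tle[OF i] s0 by (simp add: mult_left_mono)
      also have "\<dots> \<le> 1 * (s * x $ i)" using s s0 xpos[OF i] by (intro mult_right_mono, auto)
      finally show ?thesis by simp
    qed
    have Wv: "(W *\<^sub>v v) $ i \<le> s * v $ i" if i: "i < n + n" for i
    proof (cases "i < n")
      case True
      thus ?thesis unfolding Wv' using Wtopi[OF True] xi[OF True] W11c W12c x y by simp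
    next
      case False
      hence "i - n < n" using i by simp
      hence "x $ (i - n) \<le> s * y $ (i - n)" by (rule xle)
      thus ?thesis unfolding Wv' using False i W11c W12c x y yi[of "i - n"] by simp
    qed
    show ?thesis by (rule rho_le[OF Wc Wn nn v vpos Wv])
  qed
  have rT: "rho T < 1" using T1lt unfolding T_def .
  have main: "rho W \<le> rho T"
  proof (rule ccontr)
    assume "\<not> ?thesis"
    hence lt: "rho T < rho W" by simp
    define s where "s = (rho T + min (rho W) 1) / 2"
    have "rho T < s" "s \<le> 1" "s < rho W" using lt rT unfolding s_def by (auto simp: min_def)
    with Wle[of s] show False by simp
  qed
  have eqT: "four_block_mat (pinv P1 * R1) (- (pinv P1 * S1)) (1\<^sub>m n) (0\<^sub>m n n) = T"
    unfolding T_def X1_def Y1_def G1_def ..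
  have eqW: "four_block_mat (pinv P2 * R2 * pinv P1 * R1 - pinv P2 * S2) (- (pinv P2 * R2 * pinv P1 * S1))
       (1\<^sub>m n) (0\<^sub>m n n) = W"
    unfolding W_def W11_def W12_def G1_def G2_def ..
  show ?thesis unfolding eqT eqW using main rT by simp
qed

end
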